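(* Let $d,k,S\ge1$ be integers and $N\ge (S+1)^d k$. Let $f(\mathbf{x}_1,\dots,\mathbf{x}_N)$, $\mathbf{x}_i\in\mathbb{R}^d$, be a real polynomial in the $dN$ coordinates such that for each $j\in\{1,\dots,N\}$ the degree of $f$ in $\mathbf{x}_j$ is at most $S$, and such that $f=0$ on $\triangle_k$. Then $f\equiv0$.
   Context: The degree of $f$ in $\mathbf{x}_j$ means the total degree of $f$ as a polynomial in the $d$ coordinates of $\mathbf{x}_j$ (coefficients being polynomials in the other variables). $\triangle_k=\{(\mathbf{x}_1,\dots,\mathbf{x}_N)\in(\mathbb{R}^d)^N:\mathbf{x}_{j_1}=\dots=\mathbf{x}_{j_k}\text{ for some distinct indices }j_1,\dots,j_k\}$ (for $k=1$ this is all of $(\mathbb{R}^d)^N$). *)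

theory Defs
  imports Complex_Main
begin

text \<open>Real polynomials in the d*N coordinates x_j i (j < N, i < d) are represented
by their coefficient function on exponent vectors e :: nat \<times> nat \<Rightarrow> nat,
where e (j,i) is the exponent of coordinate i of the point x_j.\<close>

definition is_poly :: "nat \<Rightarrow> nat \<Rightarrow> (((nat \<times> nat) \<Rightarrow> nat) \<Rightarrow> real) \<Rightarrow> bool" where
  "is_poly N d c \<longleftrightarrow> finite {e. c e \<noteq> 0} \<and>
     (\<forall>e. c e \<noteq> 0 \<longrightarrow> (\<forall>j i. \<not> (j < N \<and> i < d) \<longrightarrow> e (j, i) = 0))"

definition mono_eval :: "nat \<Rightarrow> nat \<Rightarrow> ((nat \<times> nat) \<Rightarrow> nat) \<Rightarrow> (nat \<Rightarrow> nat \<Rightarrow> real) \<Rightarrow> real" where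
  "mono_eval N d e x = (\<Prod>j<N. \<Prod>i<d. x j i ^ e (j, i))"

definition poly_eval :: "nat \<Rightarrow> nat \<Rightarrow> (((nat \<times> nat) \<Rightarrow> nat) \<Rightarrow> real) \<Rightarrow> (nat \<Rightarrow> nat \<Rightarrow> real) \<Rightarrow> real" where
  "poly_eval N d c x = (\<Sum>e\<in>{e. c e \<noteq> 0}. c e * mono_eval N d e x)"

definition deg_in_point :: "nat \<Rightarrow> (((nat \<times> nat) \<Rightarrow> nat) \<Rightarrow> real) \<Rightarrow> nat \<Rightarrow> nat" where
  "deg_in_point d c j = Max (insert 0 {(\<Sum>i<d. e (j, i)) | e. c e \<noteq> 0})"

definition in_diag :: "nat \<Rightarrow> nat \<Rightarrow> nat \<Rightarrow> (nat \<Rightarrow> nat \<Rightarrow> real) \<Rightarrow> bool" where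
  "in_diag N d k x \<longleftrightarrow> (\<exists>J. J \<subseteq> {..<N} \<and> card J = k \<and>
      (\<forall>a\<in>J. \<forall>b\<in>J. \<forall>i<d. x a i = x b i))"

end

theory Submission imports Defs "HOL-Computational_Algebra.Polynomial" begin
lemma univ_zero:
  fixes b :: "nat \<Rightarrow> real" and G :: "real set"
  assumes fin: "finite G" and cardG: "S < card G"
    and van: "\<forall>t\<in>G. (\<Sum>a\<le>S. t ^ a * b a) = 0"
  shows "\<forall>a\<le>S. b a = 0"
proof -
  define p where "p = (\<Sum>a\<le>S. monom (b a) a)"
  have ev: "poly p t = (\<Sum>a\<le>S. t ^ a * b a)" for t
    unfolding p_def by (simp add: poly_sum poly_monom mult.commute)
  have p0: "p = 0"
  proof (rule ccontr)
    assume "p \<noteq> 0"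
    then have "card {x. poly p x = 0} \<le> degree p" by (rule card_poly_roots_bound)
    also have "degree p \<le> S" unfolding p_def
      by (rule degree_sum_le) (auto intro: order_trans[OF degree_monom_le])
    finally have "card {x. poly p x = 0} \<le> S" .
    moreover have "G \<subseteq> {x. poly p x = 0}" using van ev by auto
    moreover have "finite {x. poly p x = 0}" using \<open>p \<noteq> 0\<close> poly_roots_finite by blast
    ultimately have "card G \<le> S" using card_mono by (meson order_trans)
    with cardG show False by simp
  qed
  show ?thesis
  proof (intro allI impI)
    fix a assume "a \<le> S"
    have "coeff p a = b a" unfolding p_def using coeff_sum_monom[OF \<open>a \<le> S\<close>] .
    with p0 show "b a = 0" by simp
  qed
qed
definition ev :: "'v set \<Rightarrow> (('v \<Rightarrow> nat) \<Rightarrow> real) \<Rightarrow> ('v \<Rightarrow> real) \<Rightarrow> real" where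
  "ev V c x = (\<Sum>e\<in>{e. c e \<noteq> 0}. c e * (\<Prod>w\<in>V. x w ^ e w))"

lemma grid_zero:
  fixes G :: "real set"
  assumes "finite V" and finG: "finite G" and cardG: "S < card G"
  shows "finite {e. c e \<noteq> 0} \<Longrightarrow> (\<forall>e. c e \<noteq> 0 \<longrightarrow> (\<forall>w. w \<notin> V \<longrightarrow> e w = 0) \<and> (\<forall>w. e w \<le> S))
    \<Longrightarrow> (\<forall>x. (\<forall>w\<in>V. x w \<in> G) \<longrightarrow> ev V c x = 0) \<Longrightarrow> \<forall>e. c e = 0"
  using assms(1)
proof (induction V arbitrary: c rule: finite_induct)
  case empty
  have sub: "{e. c e \<noteq> 0} \<subseteq> {\<lambda>_. 0}" using empty.prems(2) by auto
  have "ev {} c x = (if c (\<lambda>_. 0) = 0 then 0 else c (\<lambda>_. 0))" for x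
  proof (cases "c (\<lambda>_. 0) = 0")
    case True
    then have "{e. c e \<noteq> 0} = {}" using sub by auto
    then show ?thesis using True by (simp add: ev_def)
  next
    case False
    then have "{e. c e \<noteq> 0} = {\<lambda>_. 0}" using sub by auto
    then show ?thesis using False by (simp add: ev_def)
  qed
  then have "c (\<lambda>_. 0) = 0" using empty.prems(3) by (metis empty_iff)
  then show ?case using sub by auto
next
  case (insert v V)
  define ca where "ca a e = (if e v = 0 then c (e(v:=a)) else 0)" for a e
  have supp_ca: "{e. ca a e \<noteq> 0} \<subseteq> (\<lambda>e. e(v:=0)) ` {e. c e \<noteq> 0}" for a
  proof
    fix e assume "e \<in> {e. ca a e \<noteq> 0}"
    then have "e v = 0" "c (e(v:=a)) \<noteq> 0" unfolding ca_def by (auto split: if_splits)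
    then have "e = (e(v:=a))(v:=0)" by auto
    then show "e \<in> (\<lambda>e. e(v:=0)) ` {e. c e \<noteq> 0}" using \<open>c (e(v:=a)) \<noteq> 0\<close> by blast
  qed
  have fin_ca: "finite {e. ca a e \<noteq> 0}" for a
    using finite_subset[OF supp_ca] insert.prems(1) by blast
  have cond_ca: "\<forall>e. ca a e \<noteq> 0 \<longrightarrow> (\<forall>w. w \<notin> V \<longrightarrow> e w = 0) \<and> (\<forall>w. e w \<le> S)" for a
  proof (intro allI impI conjI)
    fix e w assume h: "ca a e \<noteq> 0"
    then have ev0: "e v = 0" and cne: "c (e(v:=a)) \<noteq> 0" unfolding ca_def by (auto split: if_splits)
    { assume "w \<notin> V"
      show "e w = 0"
      proof (cases "w = v")
        case True then show ?thesis using ev0 by simp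
      next
        case False
        then have "(e(v:=a)) w = 0" using insert.prems(2) cne \<open>w \<notin> V\<close> by auto
        then show ?thesis using False by simp
      qed }
    show "e w \<le> S"
    proof (cases "w = v")
      case True then show ?thesis using ev0 by simp
    next
      case False
      then have "(e(v:=a)) w \<le> S" using insert.prems(2) cne by blast
      then show ?thesis using False by simp
    qed
  qed
  have decomp: "ev (insert v V) c x = (\<Sum>a\<le>S. x v ^ a * ev V (ca a) x)" for x
  proof -
    let ?M = "\<lambda>e. (\<Prod>w\<in>V. x w ^ e w)"
    let ?F = "\<lambda>e. c e * (x v ^ e v * ?M e)"
    have "ev (insert v V) c x = (\<Sum>e\<in>{e. c e \<noteq> 0}. ?F e)"
      unfolding ev_def using insert.hyps by (simp add: prod.insert)
    also have "\<dots> = (\<Sum>e\<in>{e. c e \<noteq> 0}. \<Sum>a\<le>S. (if e v = a then ?F e else 0))"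
    proof (rule sum.cong[OF refl])
      fix e assume "e \<in> {e. c e \<noteq> 0}"
      then have "e v \<le> S" using insert.prems(2) by blast
      then show "?F e = (\<Sum>a\<le>S. (if e v = a then ?F e else 0))"
        by (simp add: sum.delta)
    qed
    also have "\<dots> = (\<Sum>a\<le>S. \<Sum>e\<in>{e. c e \<noteq> 0}. (if e v = a then ?F e else 0))"
      by (rule sum.swap)
    also have "\<dots> = (\<Sum>a\<le>S. x v ^ a * ev V (ca a) x)"
    proof (rule sum.cong[OF refl])
      fix a
      have "(\<Sum>e\<in>{e. c e \<noteq> 0}. (if e v = a then ?F e else 0))
          = (\<Sum>e\<in>{e. c e \<noteq> 0 \<and> e v = a}. ?F e)"
        using insert.prems(1) by (simp add: sum.inter_filter[symmetric] conj_commute)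
      also have "\<dots> = (\<Sum>e\<in>{e. c e \<noteq> 0 \<and> e v = a}. x v ^ a * (c e * ?M e))"
        by (rule sum.cong) (auto simp: algebra_simps)
      also have "\<dots> = x v ^ a * (\<Sum>e\<in>{e. c e \<noteq> 0 \<and> e v = a}. c e * ?M e)"
        by (simp add: sum_distrib_left)
      also have "(\<Sum>e\<in>{e. c e \<noteq> 0 \<and> e v = a}. c e * ?M e) = ev V (ca a) x"
      proof -
        have bij: "bij_betw (\<lambda>e. e(v:=a)) {e. ca a e \<noteq> 0} {e. c e \<noteq> 0 \<and> e v = a}"
        proof (rule bij_betw_byWitness[where f'="\<lambda>e. e(v:=0)"])
          show "\<forall>e\<in>{e. ca a e \<noteq> 0}. (e(v:=a))(v:=0) = e"
            unfolding ca_def by (auto split: if_splits)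
          show "\<forall>e\<in>{e. c e \<noteq> 0 \<and> e v = a}. (e(v:=0))(v:=a) = e" by auto
          show "(\<lambda>e. e(v:=a)) ` {e. ca a e \<noteq> 0} \<subseteq> {e. c e \<noteq> 0 \<and> e v = a}"
            unfolding ca_def by (auto split: if_splits)
          show "(\<lambda>e. e(v:=0)) ` {e. c e \<noteq> 0 \<and> e v = a} \<subseteq> {e. ca a e \<noteq> 0}"
            unfolding ca_def by auto
        qed
        have "(\<Sum>e\<in>{e. c e \<noteq> 0 \<and> e v = a}. c e * ?M e)
            = (\<Sum>e\<in>{e. ca a e \<noteq> 0}. c (e(v:=a)) * ?M (e(v:=a)))"
          using sum.reindex_bij_betw[OF bij, of "\<lambda>e. c e * ?M e", symmetric] by (simp only: o_def)
        also have "\<dots> = (\<Sum>e\<in>{e. ca a e \<noteq> 0}. ca a e * ?M e)"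
        proof (rule sum.cong[OF refl])
          fix e assume "e \<in> {e. ca a e \<noteq> 0}"
          then have "e v = 0" unfolding ca_def by (auto split: if_splits)
          moreover have "?M (e(v:=a)) = ?M e"
            using insert.hyps(2) by (intro prod.cong) auto
          ultimately show "c (e(v:=a)) * ?M (e(v:=a)) = ca a e * ?M e"
            unfolding ca_def by simp
        qed
        finally show ?thesis unfolding ev_def .
      qed
      finally show "(\<Sum>e\<in>{e. c e \<noteq> 0}. (if e v = a then ?F e else 0)) = x v ^ a * ev V (ca a) x" .
    qed
    finally show ?thesis .
  qed
  have indep: "ev V (ca a) (x(v:=t)) = ev V (ca a) x" for a x t
    unfolding ev_def using insert.hyps(2)
    by (intro sum.cong refl arg_cong2[where f="(*)"] prod.cong) auto
  have van_ca: "\<forall>x. (\<forall>w\<in>V. x w \<in> G) \<longrightarrow> ev V (ca a) x = 0" if "a \<le> S" for a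
  proof (intro allI impI)
    fix x assume xG: "\<forall>w\<in>V. x w \<in> G"
    have "\<forall>t\<in>G. (\<Sum>a\<le>S. t ^ a * ev V (ca a) x) = 0"
    proof
      fix t assume "t \<in> G"
      have "ev (insert v V) c (x(v:=t)) = 0"
        using insert.prems(3) xG \<open>t \<in> G\<close> by auto
      then show "(\<Sum>a\<le>S. t ^ a * ev V (ca a) x) = 0"
        using decomp[of "x(v:=t)"] indep by simp
    qed
    then show "ev V (ca a) x = 0" using univ_zero[OF finG cardG, of "\<lambda>a. ev V (ca a) x"] that by blast
  qed
  have ca0: "\<forall>e. ca a e = 0" if "a \<le> S" for a
    using insert.IH[OF fin_ca cond_ca van_ca[OF that]] .
  show ?case
  proof (intro allI, rule ccontr)
    fix e assume "c e \<noteq> 0"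
    then have "e v \<le> S" using insert.prems(2) by blast
    have "ca (e v) (e(v:=0)) = c e" unfolding ca_def by simp
    then show False using ca0[OF \<open>e v \<le> S\<close>] \<open>c e \<noteq> 0\<close> by simp
  qed
qed
lemma pigeon:
  fixes x :: "nat \<Rightarrow> nat \<Rightarrow> real"
  assumes k: "k \<ge> 1" and N: "N \<ge> (S + 1) ^ d * k"
    and xG: "\<forall>j<N. \<forall>i<d. x j i \<in> real ` {0..S}"
  shows "in_diag N d k x"
proof -
  define G where "G = real ` {0..S}"
  have cG: "card G = S + 1" unfolding G_def by (simp add: card_image)
  have fG: "finite G" unfolding G_def by simp
  define T where "T = {xs. set xs \<subseteq> G \<and> length xs = d}"
  have fT: "finite T" unfolding T_def using finite_lists_length_eq[OF fG] by simp
  have cT: "card T = (S+1)^d" unfolding T_def using card_lists_length_eq[OF fG] cG by simp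
  define \<phi> where "\<phi> j = map (x j) [0..<d]" for j
  define F where "F y = {j\<in>{..<N}. \<phi> j = y}" for y
  have un: "{..<N} = (\<Union>y\<in>T. F y)"
    unfolding F_def T_def \<phi>_def G_def using xG by auto
  have "N = card (\<Union>y\<in>T. F y)" using un by (metis card_lessThan)
  also have "\<dots> = (\<Sum>y\<in>T. card (F y))"
    by (rule card_UN_disjoint) (auto simp: fT F_def)
  finally have Nsum: "N = (\<Sum>y\<in>T. card (F y))" .
  have "\<exists>y\<in>T. k \<le> card (F y)"
  proof (rule ccontr)
    assume "\<not> ?thesis"
    then have "\<forall>y\<in>T. card (F y) \<le> k - 1" by auto
    then have "N \<le> (\<Sum>y\<in>T. k - 1)" using Nsum sum_mono by metis
    also have "\<dots> = (S+1)^d * (k - 1)" using cT by simp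
    finally have "N \<le> (S+1)^d * (k-1)" .
    moreover have "(S+1)^d * (k-1) < (S+1)^d * k" using k by simp
    ultimately show False using N by linarith
  qed
  then obtain y where "k \<le> card (F y)" by blast
  then obtain J where J: "J \<subseteq> F y" "card J = k" by (meson obtain_subset_with_card_n)
  show ?thesis unfolding in_diag_def
  proof (intro exI conjI ballI allI impI)
    show "J \<subseteq> {..<N}" using J unfolding F_def by auto
    show "card J = k" by fact
    fix a b i assume "a \<in> J" "b \<in> J" "i < d"
    then have "\<phi> a = y" "\<phi> b = y" using J unfolding F_def by auto
    then have "\<phi> a ! i = \<phi> b ! i" by simp
    then show "x a i = x b i" unfolding \<phi>_def using \<open>i < d\<close> by simp
  qed
qed

theorem mainTheorem7:
  fixes d k S N :: nat and c :: "((nat \<times> nat) \<Rightarrow> nat) \<Rightarrow> real"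
  assumes "d \<ge> 1" and "k \<ge> 1" and "S \<ge> 1"
    and "N \<ge> (S + 1) ^ d * k"
    and "is_poly N d c"
    and "\<forall>j<N. deg_in_point d c j \<le> S"
    and "\<forall>x. in_diag N d k x \<longrightarrow> poly_eval N d c x = 0"
  shows "\<forall>e. c e = 0"
proof -
  define V where "V = {..<N} \<times> {..<d}"
  define G where "G = real ` {0..S}"
  have cG: "card G = S + 1" unfolding G_def by (simp add: card_image)
  have fG: "finite G" unfolding G_def by simp
  have fin: "finite {e. c e \<noteq> 0}" using assms(5) unfolding is_poly_def by simp
  have cond: "\<forall>e. c e \<noteq> 0 \<longrightarrow> (\<forall>w. w \<notin> V \<longrightarrow> e w = 0) \<and> (\<forall>w. e w \<le> S)"
  proof (intro allI impI conjI)
    fix e w assume ce: "c e \<noteq> 0"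
    have out: "w \<notin> V \<Longrightarrow> e w = 0" for w
      using assms(5) ce unfolding is_poly_def V_def by (cases w) auto
    then show "w \<notin> V \<Longrightarrow> e w = 0" .
    show "e w \<le> S"
    proof (cases "w \<in> V")
      case False then show ?thesis using out by simp
    next
      case True
      then obtain j i where w: "w = (j,i)" "j < N" "i < d" unfolding V_def by auto
      have "e (j,i) \<le> (\<Sum>i'<d. e (j,i'))" using w by (intro member_le_sum) auto
      also have "\<dots> \<le> deg_in_point d c j" unfolding deg_in_point_def
      proof (rule Max_ge)
        have "{(\<Sum>i<d. e (j, i)) | e. c e \<noteq> 0} = (\<lambda>e. \<Sum>i<d. e (j, i)) ` {e. c e \<noteq> 0}" by auto
        then show "finite (insert 0 {(\<Sum>i<d. e (j, i)) | e. c e \<noteq> 0})" using fin by simp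
        show "(\<Sum>i'<d. e (j,i')) \<in> insert 0 {(\<Sum>i<d. e (j, i)) | e. c e \<noteq> 0}" using ce by auto
      qed
      also have "\<dots> \<le> S" using assms(6) w by auto
      finally show ?thesis using w by simp
    qed
  qed
  have van: "\<forall>x. (\<forall>w\<in>V. x w \<in> G) \<longrightarrow> ev V c x = 0"
  proof (intro allI impI)
    fix x' :: "nat \<times> nat \<Rightarrow> real" assume xG: "\<forall>w\<in>V. x' w \<in> G"
    define x where "x j i = x' (j,i)" for j i
    have "in_diag N d k x"
      by (rule pigeon[OF assms(2) assms(4)]) (use xG in \<open>auto simp: x_def V_def G_def\<close>)
    then have "poly_eval N d c x = 0" using assms(7) by blast
    moreover have "ev V c x' = poly_eval N d c x"
      unfolding ev_def poly_eval_def mono_eval_def V_def x_def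
      by (intro sum.cong refl arg_cong2[where f="(*)"]) (simp add: prod.cartesian_product)
    ultimately show "ev V c x' = 0" by simp
  qed
  have "finite V" unfolding V_def by simp
  from grid_zero[OF this fG, of S c] cG fin cond van show ?thesis by simp
qed
end
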